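(* Let $G$ be a $B_2$-EPG graph given with a representation, let $a,b$ be two rows, and let $Y$ be a set of vertices all with index exactly $\{a,b\}$. Suppose the projection graph of $Y$ on $a$ is not a clique. Then there is a proper typed interval $t$ on row $a$ such that: (1) every vertex of $Y$ intersects $t$; (2) for every vertex $u$ whose index is $\{a\}$ or $\{a,c\}$ with $c\neq a,b$, $u$ is adjacent to every vertex of $Y$ if and only if $u$ contains $t$.
   Context: A graph $G$ is a $B_k$-EPG graph if each vertex $u$ can be assigned a path $P_u$ in the planar orthogonal grid with at most $k$ bends such that $uv\in E(G)$ iff $P_u$ and $P_v$ share at least one grid edge (a representation); for $B_2$-EPG graphs one assumes w.l.o.g. every path has exactly two bends. A vertex $u$ intersects a row if $P_u$ contains a grid edge of that row; the index of $u$ is the set of rows it intersects. If $a$ is in the index of $u$, $P_u^a$ is the segment of row $a$ between the two points of row $a$ where $P_u$ stops or bends. Types: $\emptyset$, $\mathsf d$, $\mathsf u$. A typed interval on row $a$ is $[x\alpha, y\beta]$ with $\alpha\le\beta$ points of row $a$ and $x,y$ types; it is proper if $\alpha\neq\beta$, or $\alpha=\beta$, $x=y$ and $x\in\{\mathsf u,\mathsf d\}$. For typed intervals $t=[x\alpha,y\beta]$, $t'=[x'\alpha',y'\beta']$ on row $a$ and an endpoint $z\gamma\in\{x'\alpha',y'\beta'\}$ of $t'$, $t$ is coherent with $z\gamma$ if (i) $\gamma\in(\alpha,\beta)$ (open interval), or (ii) $z=\emptyset$ and $[\alpha,\beta]$ contains the grid edge of $[\alpha',\beta']$ incident to $\gamma$,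 or (iii) $z\neq\emptyset$ and $z\gamma\in\{x\alpha,y\beta\}$. $t$ contains $t'$ if $[\alpha',\beta']\subseteq[\alpha,\beta]$ and $t$ is coherent with both endpoints of $t'$. $t$ intersects $t'$ if $[\alpha,\beta]\cap[\alpha',\beta']$ contains a grid edge, or $t$ is coherent with an endpoint of $t'$, or $t'$ is coherent with an endpoint of $t$. The t-projection of $u$ on $a$ is $[x\alpha,y\beta]$ where $\alpha,\beta$ are the endpoints of $P_u^a$ and the type of an endpoint $\gamma$ is $\emptyset$ if $P_u$ ends at $\gamma$, $\mathsf d$ if $P_u$ bends downwards at $\gamma$, $\mathsf u$ if upwards. A vertex contains (intersects) a typed interval $t$ on $a$ if its t-projection on $a$ contains (intersects) $t$. The projection graph of a set $Y$ of vertices whose indices contain $a$ is the graph on $Y$ in which $u,v$ are adjacent iff their t-projections on $a$ intersect. *)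

theory Defs
  imports Main
begin

text \<open>Grid points are pairs (x, y) of integers; row a is the horizontal line y = a.
  A grid edge is either the horizontal unit segment from (x,y) to (x+1,y) (HE x y)
  or the vertical unit segment from (x,y) to (x,y+1) (VE x y).\<close>

type_synonym point = "int \<times> int"

datatype gedge = HE int int | VE int int

definition seg_edges :: "point \<Rightarrow> point \<Rightarrow> gedge set" where
  "seg_edges p q =
     (if snd p = snd q then {HE x (snd p) | x. min (fst p) (fst q) \<le> x \<and> x < max (fst p) (fst q)}
      else if fst p = fst q then {VE (fst p) y | y. min (snd p) (snd q) \<le> y \<and> y < max (snd p) (snd q)}
      else {})"

text \<open>A path with exactly two bends, given by its start point, its two bend points and its
  end point. (For B_2-EPG graphs one assumes w.l.o.g. every path has exactly two bends.)\<close>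

datatype path2 = Path point point point point

definition horiz :: "point \<Rightarrow> point \<Rightarrow> bool" where
  "horiz p q \<longleftrightarrow> snd p = snd q \<and> fst p \<noteq> fst q"

definition vert :: "point \<Rightarrow> point \<Rightarrow> bool" where
  "vert p q \<longleftrightarrow> fst p = fst q \<and> snd p \<noteq> snd q"

fun valid_path :: "path2 \<Rightarrow> bool" where
  "valid_path (Path p0 p1 p2 p3) \<longleftrightarrow>
     (horiz p0 p1 \<and> vert p1 p2 \<and> horiz p2 p3) \<or> (vert p0 p1 \<and> horiz p1 p2 \<and> vert p2 p3)"

fun pedges :: "path2 \<Rightarrow> gedge set" where
  "pedges (Path p0 p1 p2 p3) = seg_edges p0 p1 \<union> seg_edges p1 p2 \<union> seg_edges p2 p3"

definition B2_rep :: "'v set \<Rightarrow> ('v \<Rightarrow> 'v \<Rightarrow> bool) \<Rightarrow> ('v \<Rightarrow> path2) \<Rightarrow> bool" where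
  "B2_rep V adj P \<longleftrightarrow>
     (\<forall>u\<in>V. valid_path (P u)) \<and>
     (\<forall>u\<in>V. \<forall>v\<in>V. adj u v \<longleftrightarrow> u \<noteq> v \<and> pedges (P u) \<inter> pedges (P v) \<noteq> {})"

definition index :: "('v \<Rightarrow> path2) \<Rightarrow> 'v \<Rightarrow> int set" where
  "index P u = {a. \<exists>x. HE x a \<in> pedges (P u)}"

datatype ty = TE | TD | TU   \<comment> \<open>the types \<emptyset>, d, u\<close>

text \<open>A typed interval [x\<alpha>, y\<beta>] on a (fixed) row is represented as ((x,\<alpha>),(y,\<beta>)), where
  \<alpha>, \<beta> are the x-coordinates of points of that row.\<close>

type_synonym tint = "(ty \<times> int) \<times> (ty \<times> int)"

fun typed_interval :: "tint \<Rightarrow> bool" where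
  "typed_interval ((x, \<alpha>), (y, \<beta>)) \<longleftrightarrow> \<alpha> \<le> \<beta>"

fun proper :: "tint \<Rightarrow> bool" where
  "proper ((x, \<alpha>), (y, \<beta>)) \<longleftrightarrow> \<alpha> \<le> \<beta> \<and> (\<alpha> \<noteq> \<beta> \<or> (x = y \<and> x \<noteq> TE))"

text \<open>The grid edge of [\<alpha>',\<beta>'] incident to \<alpha>' is [\<alpha>',\<alpha>'+1] (it exists iff \<alpha>' < \<beta>'),
  and the one incident to \<beta>' is [\<beta>'-1,\<beta>'].\<close>

fun coh_left :: "tint \<Rightarrow> tint \<Rightarrow> bool" where
  "coh_left ((x, \<alpha>), (y, \<beta>)) ((x', \<alpha>'), (y', \<beta>')) \<longleftrightarrow>
     (\<alpha> < \<alpha>' \<and> \<alpha>' < \<beta>) \<or>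
     (x' = TE \<and> \<alpha>' < \<beta>' \<and> \<alpha> \<le> \<alpha>' \<and> \<alpha>' + 1 \<le> \<beta>) \<or>
     (x' \<noteq> TE \<and> ((x', \<alpha>') = (x, \<alpha>) \<or> (x', \<alpha>') = (y, \<beta>)))"

fun coh_right :: "tint \<Rightarrow> tint \<Rightarrow> bool" where
  "coh_right ((x, \<alpha>), (y, \<beta>)) ((x', \<alpha>'), (y', \<beta>')) \<longleftrightarrow>
     (\<alpha> < \<beta>' \<and> \<beta>' < \<beta>) \<or>
     (y' = TE \<and> \<alpha>' < \<beta>' \<and> \<alpha> \<le> \<beta>' - 1 \<and> \<beta>' \<le> \<beta>) \<or>
     (y' \<noteq> TE \<and> ((y', \<beta>') = (x, \<alpha>) \<or> (y', \<beta>') = (y, \<beta>)))"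

fun tcontains :: "tint \<Rightarrow> tint \<Rightarrow> bool" where
  "tcontains ((x, \<alpha>), (y, \<beta>)) ((x', \<alpha>'), (y', \<beta>')) \<longleftrightarrow>
     \<alpha> \<le> \<alpha>' \<and> \<beta>' \<le> \<beta> \<and>
     coh_left ((x, \<alpha>), (y, \<beta>)) ((x', \<alpha>'), (y', \<beta>')) \<and>
     coh_right ((x, \<alpha>), (y, \<beta>)) ((x', \<alpha>'), (y', \<beta>'))"

fun tintersects :: "tint \<Rightarrow> tint \<Rightarrow> bool" where
  "tintersects ((x, \<alpha>), (y, \<beta>)) ((x', \<alpha>'), (y', \<beta>')) \<longleftrightarrow>
     max \<alpha> \<alpha>' + 1 \<le> min \<beta> \<beta>' \<or>
     coh_left ((x, \<alpha>), (y, \<beta>)) ((x', \<alpha>'), (y', \<beta>')) \<or>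
     coh_right ((x, \<alpha>), (y, \<beta>)) ((x', \<alpha>'), (y', \<beta>')) \<or>
     coh_left ((x', \<alpha>'), (y', \<beta>')) ((x, \<alpha>), (y, \<beta>)) \<or>
     coh_right ((x', \<alpha>'), (y', \<beta>')) ((x, \<alpha>), (y, \<beta>))"

text \<open>Type of a bend at a point of row a, where q is the other end of the vertical segment
  leaving that point: u if the path goes upwards, d if downwards.\<close>

definition bend_ty :: "int \<Rightarrow> point \<Rightarrow> ty" where
  "bend_ty a q = (if snd q > a then TU else TD)"

definition mk_ti :: "ty \<times> int \<Rightarrow> ty \<times> int \<Rightarrow> tint" where
  "mk_ti e1 e2 = (if snd e1 \<le> snd e2 then (e1, e2) else (e2, e1))"

definition hseg_on :: "int \<Rightarrow> point \<Rightarrow> point \<Rightarrow> bool" where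
  "hseg_on a p q \<longleftrightarrow> snd p = a \<and> snd q = a \<and> fst p \<noteq> fst q"

text \<open>The t-projection of a path on row a (meaningful when a is in the index of the path).\<close>

fun tproj_path :: "path2 \<Rightarrow> int \<Rightarrow> tint" where
  "tproj_path (Path p0 p1 p2 p3) a =
     (if hseg_on a p0 p1 then mk_ti (TE, fst p0) (bend_ty a p2, fst p1)
      else if hseg_on a p1 p2 then mk_ti (bend_ty a p0, fst p1) (bend_ty a p3, fst p2)
      else mk_ti (bend_ty a p1, fst p2) (TE, fst p3))"

definition tproj :: "('v \<Rightarrow> path2) \<Rightarrow> 'v \<Rightarrow> int \<Rightarrow> tint" where
  "tproj P u a = tproj_path (P u) a"

definition proj_clique :: "('v \<Rightarrow> path2) \<Rightarrow> 'v set \<Rightarrow> int \<Rightarrow> bool" where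
  "proj_clique P Y a \<longleftrightarrow>
     (\<forall>u\<in>Y. \<forall>v\<in>Y. u \<noteq> v \<longrightarrow> tintersects (tproj P u a) (tproj P v a))"

end

theory Submission
  imports Defs
begin

lemma inter_char:
  assumes "p1 < q1" "p2 < q2"
  shows "tintersects ((x1,p1),(z1,q1)) ((x2,p2),(z2,q2)) \<longleftrightarrow>
    (max p1 p2 + 1 \<le> min q1 q2 \<or> (x1 \<noteq> TE \<and> ((x1,p1) = (x2,p2) \<or> (x1,p1) = (z2,q2))) \<or>
     (z1 \<noteq> TE \<and> ((z1,q1) = (x2,p2) \<or> (z1,q1) = (z2,q2))))"
  using assms by auto


lemma HE_seg: "HE x z \<in> seg_edges p q \<longleftrightarrow> snd p = snd q \<and> z = snd p \<and> min (fst p) (fst q) \<le> x \<and> x < max (fst p) (fst q)"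
  by (auto simp: seg_edges_def)

lemma VE_seg: "VE x z \<in> seg_edges p q \<longleftrightarrow> snd p \<noteq> snd q \<and> fst p = fst q \<and> x = fst p \<and> min (snd p) (snd q) \<le> z \<and> z < max (snd p) (snd q)"
  by (auto simp: seg_edges_def)

definition good :: "path2 \<Rightarrow> int \<Rightarrow> bool" where
"good w a \<longleftrightarrow> (let t = tproj_path w a in snd (fst t) < snd (snd t) \<and>
  (\<forall>x. HE x a \<in> pedges w \<longleftrightarrow> snd (fst t) \<le> x \<and> x < snd (snd t)) \<and>
  (\<forall>x z. VE x z \<in> pedges w \<longrightarrow> (\<exists>T. (T,x) \<in> {fst t, snd t} \<and> T \<noteq> TE \<and> (a \<le> z \<longleftrightarrow> T = TU))) \<and>
  (\<forall>T x. (T,x) \<in> {fst t, snd t} \<and> T \<noteq> TE \<longrightarrow> VE x (if T = TU then a else a - 1) \<in> pedges w))"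

lemma goodA1:
  assumes "x0 \<noteq> x1" "a \<noteq> z" "x1 \<noteq> x3"
  shows "good (Path (x0,a) (x1,a) (x1,z) (x3,z)) a"
  using assms
  by (auto simp: good_def Let_def mk_ti_def bend_ty_def hseg_on_def HE_seg VE_seg)

lemma goodA2:
  assumes "x0 \<noteq> x1" "a \<noteq> y" "x1 \<noteq> x3"
  shows "good (Path (x0,y) (x1,y) (x1,a) (x3,a)) a"
  using assms
  by (auto simp: good_def Let_def mk_ti_def bend_ty_def hseg_on_def HE_seg VE_seg)

lemma goodB:
  assumes "y0 \<noteq> a" "x0 \<noteq> x2" "y3 \<noteq> a"
  shows "good (Path (x0,y0) (x0,a) (x2,a) (x2,y3)) a"
  using assms
  by (auto simp: good_def Let_def mk_ti_def bend_ty_def hseg_on_def HE_seg VE_seg)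



lemma valid_cases:
  assumes "valid_path w"
  obtains x0 x1 x3 y z where "w = Path (x0,y) (x1,y) (x1,z) (x3,z)" "x0 \<noteq> x1" "y \<noteq> z" "x1 \<noteq> x3"
  | x0 x2 y0 y1 y3 where "w = Path (x0,y0) (x0,y1) (x2,y1) (x2,y3)" "y0 \<noteq> y1" "x0 \<noteq> x2" "y3 \<noteq> y1"
proof -
  obtain p0 p1 p2 p3 where w: "w = Path p0 p1 p2 p3" by (cases w)
  obtain x0 y0 x1 y1 x2 y2 x3 y3 where p: "p0 = (x0,y0)" "p1 = (x1,y1)" "p2 = (x2,y2)" "p3 = (x3,y3)"
    by (cases p0; cases p1; cases p2; cases p3) auto
  show thesis using assms that unfolding w p by (auto simp: horiz_def vert_def)
qed

lemma index_A: "x0 \<noteq> x1 \<Longrightarrow> y \<noteq> z \<Longrightarrow> x1 \<noteq> x3 \<Longrightarrow>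
  {a. \<exists>x. HE x a \<in> pedges (Path (x0,y) (x1,y) (x1,z) (x3,z))} = {y, z}"
proof (intro equalityI subsetI)
  fix a assume "x0 \<noteq> x1" "y \<noteq> z" "x1 \<noteq> x3"
    "a \<in> {a. \<exists>x. HE x a \<in> pedges (Path (x0,y) (x1,y) (x1,z) (x3,z))}"
  then show "a \<in> {y,z}" by (auto simp: HE_seg)
next
  fix a assume h: "x0 \<noteq> x1" "y \<noteq> z" "x1 \<noteq> x3" "a \<in> {y,z}"
  show "a \<in> {a. \<exists>x. HE x a \<in> pedges (Path (x0,y) (x1,y) (x1,z) (x3,z))}"
  proof (cases "a = y")
    case True
    then have "HE (min x0 x1) a \<in> pedges (Path (x0,y) (x1,y) (x1,z) (x3,z))"
      using h by (auto simp: HE_seg)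
    then show ?thesis by blast
  next
    case False
    then have "HE (min x1 x3) a \<in> pedges (Path (x0,y) (x1,y) (x1,z) (x3,z))"
      using h by (auto simp: HE_seg)
    then show ?thesis by blast
  qed
qed

lemma index_B: "y0 \<noteq> y1 \<Longrightarrow> x0 \<noteq> x2 \<Longrightarrow> y3 \<noteq> y1 \<Longrightarrow>
  {a. \<exists>x. HE x a \<in> pedges (Path (x0,y0) (x0,y1) (x2,y1) (x2,y3))} = {y1}"
proof (intro equalityI subsetI)
  fix a assume "y0 \<noteq> y1" "x0 \<noteq> x2" "y3 \<noteq> y1"
    "a \<in> {a. \<exists>x. HE x a \<in> pedges (Path (x0,y0) (x0,y1) (x2,y1) (x2,y3))}"
  then show "a \<in> {y1}" by (auto simp: HE_seg)
next
  fix a assume h: "y0 \<noteq> y1" "x0 \<noteq> x2" "y3 \<noteq> y1" "a \<in> {y1}"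
  then have "HE (min x0 x2) a \<in> pedges (Path (x0,y0) (x0,y1) (x2,y1) (x2,y3))"
    by (auto simp: HE_seg)
  then show "a \<in> {a. \<exists>x. HE x a \<in> pedges (Path (x0,y0) (x0,y1) (x2,y1) (x2,y3))}" by blast
qed

lemma good_path:
  assumes "valid_path w" "a \<in> {a. \<exists>x. HE x a \<in> pedges w}"
  shows "good w a"
  using assms(1)
proof (cases rule: valid_cases)
  case (1 x0 x1 x3 y z)
  with assms(2) index_A[OF 1(2-4)] have "a = y \<or> a = z" by auto
  then show ?thesis using 1 goodA1 goodA2 by auto
next
  case (2 x0 x2 y0 y1 y3)
  with assms(2) index_B[OF 2(2-4)] have "a = y1" by auto
  then show ?thesis using 2 goodB by auto
qed

lemma yshape:
  assumes "valid_path w" "{z. \<exists>x. HE x z \<in> pedges w} = {a, b}" "a \<noteq> b"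
  shows "\<exists>c1 \<alpha> c2 \<beta>. tproj_path w a = ((c1,\<alpha>),(c2,\<beta>)) \<and> \<alpha> < \<beta> \<and>
     ((c1 = TE \<and> c2 = (if a < b then TU else TD)) \<or> (c1 = (if a < b then TU else TD) \<and> c2 = TE))"
  using assms(1)
proof (cases rule: valid_cases)
  case (1 x0 x1 x3 y z)
  with assms(2) index_A[OF 1(2-4)] have "{y,z} = {a,b}" by simp
  with assms(3) have "(a = y \<and> b = z) \<or> (a = z \<and> b = y)"
    by (metis doubleton_eq_iff)
  then show ?thesis using 1
    by (auto simp: mk_ti_def bend_ty_def hseg_on_def)
next
  case (2 x0 x2 y0 y1 y3)
  with assms(2) index_B[OF 2(2-4)] have "{y1} = {a,b}" by simp
  with assms(3) have False by (metis insertCI singletonD)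
  then show ?thesis by simp
qed



definition tl1 :: "ty \<Rightarrow> ty \<Rightarrow> int \<Rightarrow> ty \<times> int" where
  "tl1 D b1 r = (if b1 = TE then (TE,r-1) else (D,r))"
definition tr1 :: "ty \<Rightarrow> ty \<Rightarrow> int \<Rightarrow> ty \<times> int" where
  "tr1 D a2 l = (if a2 = TE then (TE,l+1) else (D,l))"

lemma le_r:
  assumes "p < q" "\<alpha>1 < r" "tintersects ((xu,p),(zu,q)) ((a1,\<alpha>1),(b1,r))"
  shows "p \<le> r"
  using assms by (auto simp: inter_char)

lemma ge_l:
  assumes "p < q" "l < \<beta>2" "tintersects ((xu,p),(zu,q)) ((a2,l),(b2,\<beta>2))"
  shows "l \<le> q"
  using assms by (auto simp: inter_char)

lemma Cl:
  assumes "D \<noteq> TE" "(a1 = TE \<and> b1 = D) \<or> (a1 = D \<and> b1 = TE)" "\<alpha>1 < r"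
    "p < q" "p \<le> r" "r \<le> q"
    "tintersects ((xu,p),(zu,q)) ((a1,\<alpha>1),(b1,r))"
  shows "if b1 = TE then p < r else (p < r \<or> (p = r \<and> xu = D))"
  using assms by (auto simp: inter_char)

lemma Cr:
  assumes "D \<noteq> TE" "(a2 = TE \<and> b2 = D) \<or> (a2 = D \<and> b2 = TE)" "l < \<beta>2"
    "p < q" "p \<le> l" "l \<le> q"
    "tintersects ((xu,p),(zu,q)) ((a2,l),(b2,\<beta>2))"
  shows "if a2 = TE then l < q else (l < q \<or> (q = l \<and> zu = D))"
  using assms by (auto simp: inter_char)

lemma contains_iff:
  assumes "D \<noteq> TE" "r \<le> l" "p < q"
  shows "tcontains ((xu,p),(zu,q)) (tl1 D b1 r, tr1 D a2 l) \<longleftrightarrow>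
     (if b1 = TE then p < r else (p < r \<or> (p = r \<and> xu = D))) \<and>
     (if a2 = TE then l < q else (l < q \<or> (q = l \<and> zu = D)))"
  using assms by (auto simp: tl1_def tr1_def)



lemma J1: "max a1 a2 + 1 \<le> min b1 b2 \<Longrightarrow> tintersects ((x1,a1),(y1,b1)) ((x2,a2),(y2,b2))"
  by (simp only: tintersects.simps) blast
lemma J5: "x \<noteq> TE \<Longrightarrow> tintersects ((x,\<gamma>),(z,\<delta>)) ((c1,\<alpha>),(x,\<gamma>))"
  by (simp only: tintersects.simps coh_left.simps coh_right.simps) simp
lemma J6: "z \<noteq> TE \<Longrightarrow> tintersects ((x,\<gamma>),(z,\<delta>)) ((z,\<delta>),(c2,\<beta>))"
  by (simp only: tintersects.simps coh_left.simps coh_right.simps) simp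

lemma dir2:
  assumes "D \<noteq> TE" "(c1 = TE \<and> c2 = D) \<or> (c1 = D \<and> c2 = TE)" "\<alpha> < \<beta>"
    "r \<le> \<beta>" "\<alpha> \<le> l" "r \<le> l"
    "\<beta> = r \<Longrightarrow> c2 = TE \<Longrightarrow> b1 = TE"
    "\<alpha> = l \<Longrightarrow> c1 = TE \<Longrightarrow> a2 = TE"
    "p < q"
    "if b1 = TE then p < r else (p < r \<or> (p = r \<and> xu = D))"
    "if a2 = TE then l < q else (l < q \<or> (q = l \<and> zu = D))"
  shows "tintersects ((xu,p),(zu,q)) ((c1,\<alpha>),(c2,\<beta>))"
proof -
  have pr: "p \<le> r" "l \<le> q" using assms(10,11) by (auto split: if_splits)
  have edge: "max p \<alpha> + 1 \<le> min q \<beta> \<Longrightarrow> ?thesis" by (rule J1)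
  show ?thesis
  proof (cases "\<beta> = r")
    case True
    show ?thesis
    proof (cases "p < r")
      case True
      then show ?thesis using \<open>\<beta> = r\<close> assms(3,6) pr by (intro edge) (simp add: max_def min_def)
    next
      case False
      then have "b1 \<noteq> TE" "p = r" "xu = D" using assms(10) by (auto split: if_splits)
      then have "c2 \<noteq> TE" using assms(7) True by blast
      then have "c2 = D" using assms(2) by auto
      then show ?thesis using \<open>p = r\<close> \<open>xu = D\<close> True J5[OF assms(1)] by simp
    qed
  next
    case nb: False
    show ?thesis
    proof (cases "\<alpha> = l")
      case True
      show ?thesis
      proof (cases "l < q")
        case True
        then show ?thesis using \<open>\<alpha> = l\<close> assms(3,4,6) pr nb by (intro edge) (simp add: max_def min_def)
      next
        case False
        then have "a2 \<noteq> TE" "q = l" "zu = D" using assms(11) by (auto split: if_splits)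
        then have "c1 \<noteq> TE" using assms(8) True by blast
        then have "c1 = D" using assms(2) by auto
        then show ?thesis using \<open>q = l\<close> \<open>zu = D\<close> True J6[OF assms(1)] by simp
      qed
    next
      case False
      then show ?thesis using nb assms(3,4,5,9) pr by (intro edge) (simp add: max_def min_def)
    qed
  qed
qed



lemma I1: "max a1 a2 + 1 \<le> min b1 b2 \<Longrightarrow> tintersects ((x1,a1),(y1,b1)) ((x2,a2),(y2,b2))"
  by (simp only: tintersects.simps) blast
lemma I2: "c2 \<noteq> TE \<Longrightarrow> tintersects ((c1,\<alpha>),(c2,\<beta>)) ((c2,\<beta>),(y,\<gamma>))"
  by (simp only: tintersects.simps coh_right.simps) simp
lemma I3: "c1 \<noteq> TE \<Longrightarrow> tintersects ((c1,\<alpha>),(c2,\<beta>)) ((x,\<gamma>),(c1,\<alpha>))"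
  by (simp only: tintersects.simps coh_left.simps) simp
lemma I4: "\<alpha> < \<gamma> \<Longrightarrow> \<gamma> < \<beta> \<Longrightarrow> tintersects ((c1,\<alpha>),(c2,\<beta>)) ((x,\<gamma>),(y,\<delta>))"
  by (simp only: tintersects.simps coh_left.simps) simp

lemma dir3:
  assumes "D \<noteq> TE" "(c1 = TE \<and> c2 = D) \<or> (c1 = D \<and> c2 = TE)" "\<alpha> < \<beta>"
    "r \<le> \<beta>" "\<alpha> \<le> l" "r \<le> l"
    "\<beta> = r \<Longrightarrow> c2 = TE \<Longrightarrow> b1 = TE"
    "\<alpha> = l \<Longrightarrow> c1 = TE \<Longrightarrow> a2 = TE"
  shows "tintersects ((c1,\<alpha>),(c2,\<beta>)) (tl1 D b1 r, tr1 D a2 l)"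
proof -
  obtain xl pl where L: "tl1 D b1 r = (xl,pl)" by fastforce
  obtain xr pr where R: "tr1 D a2 l = (xr,pr)" by fastforce
  show ?thesis
  proof (cases "\<beta> = r \<and> c2 = D \<and> b1 \<noteq> TE")
    case True
    then have "tl1 D b1 r = (c2,\<beta>)" by (simp add: tl1_def)
    then show ?thesis using I2 assms(1) True by (metis R)
  next
    case nA: False
    show ?thesis
    proof (cases "\<alpha> = l \<and> c1 = D \<and> a2 \<noteq> TE")
      case True
      then have "tr1 D a2 l = (c1,\<alpha>)" by (simp add: tr1_def)
      then show ?thesis using I3 assms(1) True by (metis L)
    next
      case nB: False
      have pl: "pl = (if b1 = TE then r - 1 else r)" using L by (auto simp: tl1_def)
      have pr: "pr = (if a2 = TE then l + 1 else l)" using R by (auto simp: tr1_def)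
      have "b1 \<noteq> TE \<Longrightarrow> \<beta> \<noteq> r" using nA assms(2,7) by auto
      then have h1: "pl + 1 \<le> \<beta>" using pl assms(4) by (cases "b1 = TE") auto
      have "a2 \<noteq> TE \<Longrightarrow> \<alpha> \<noteq> l" using nB assms(2,8) by auto
      then have h2: "\<alpha> + 1 \<le> pr" using pr assms(5) by (cases "a2 = TE") auto
      show ?thesis
      proof (cases "pl < pr")
        case True
        then have "max \<alpha> pl + 1 \<le> min \<beta> pr" using h1 h2 assms(3) by (auto simp: max_def min_def)
        then show ?thesis unfolding L R by (rule I1)
      next
        case False
        then have f: "pl = r" "pr = l" "r = l" "b1 \<noteq> TE" "a2 \<noteq> TE" using L R assms(6)
          by (auto simp: tl1_def tr1_def split: if_splits)
        then have ne: "\<alpha> \<noteq> l" "\<beta> \<noteq> r" using nA nB assms(2,7,8) by auto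
        have "\<alpha> < pl" "pl < \<beta>" using ne f assms(4,5) by auto
        then show ?thesis unfolding L R by (rule I4)
      qed
    qed
  qed
qed

lemma dir4:
  assumes "D \<noteq> TE" "r \<le> l"
  shows "proper (tl1 D b1 r, tr1 D a2 l)"
  using assms by (auto simp: tl1_def tr1_def)



lemma ty_eq: "T1 \<noteq> TE \<Longrightarrow> T2 \<noteq> TE \<Longrightarrow> (T1 = TU \<longleftrightarrow> T2 = TU) \<Longrightarrow> T1 = T2"
  by (cases T1; cases T2; auto)

lemma adj_char:
  assumes g1: "good w1 a" and g2: "good w2 a"
    and rows: "\<forall>z. (\<exists>x. HE x z \<in> pedges w1) \<and> (\<exists>x. HE x z \<in> pedges w2) \<longrightarrow> z = a"
  shows "pedges w1 \<inter> pedges w2 \<noteq> {} \<longleftrightarrow> tintersects (tproj_path w1 a) (tproj_path w2 a)"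
proof -
  obtain x1 p1 z1 q1 where t1: "tproj_path w1 a = ((x1,p1),(z1,q1))" by (metis prod.collapse)
  obtain x2 p2 z2 q2 where t2: "tproj_path w2 a = ((x2,p2),(z2,q2))" by (metis prod.collapse)
  have G1: "p1 < q1 \<and> (\<forall>x. HE x a \<in> pedges w1 \<longleftrightarrow> p1 \<le> x \<and> x < q1) \<and>
    (\<forall>x z. VE x z \<in> pedges w1 \<longrightarrow> (\<exists>T. (T,x) \<in> {(x1,p1),(z1,q1)} \<and> T \<noteq> TE \<and> (a \<le> z \<longleftrightarrow> T = TU))) \<and>
    (\<forall>T x. (T,x) \<in> {(x1,p1),(z1,q1)} \<and> T \<noteq> TE \<longrightarrow> VE x (if T = TU then a else a - 1) \<in> pedges w1)"
    using g1 unfolding good_def Let_def t1 fst_conv snd_conv by assumption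
  have G2: "p2 < q2 \<and> (\<forall>x. HE x a \<in> pedges w2 \<longleftrightarrow> p2 \<le> x \<and> x < q2) \<and>
    (\<forall>x z. VE x z \<in> pedges w2 \<longrightarrow> (\<exists>T. (T,x) \<in> {(x2,p2),(z2,q2)} \<and> T \<noteq> TE \<and> (a \<le> z \<longleftrightarrow> T = TU))) \<and>
    (\<forall>T x. (T,x) \<in> {(x2,p2),(z2,q2)} \<and> T \<noteq> TE \<longrightarrow> VE x (if T = TU then a else a - 1) \<in> pedges w2)"
    using g2 unfolding good_def Let_def t2 fst_conv snd_conv by assumption
  from G1 have A1: "p1 < q1" "\<And>x. HE x a \<in> pedges w1 \<longleftrightarrow> p1 \<le> x \<and> x < q1"
    "\<And>x z. VE x z \<in> pedges w1 \<Longrightarrow> (\<exists>T. (T,x) \<in> {(x1,p1),(z1,q1)} \<and> T \<noteq> TE \<and> (a \<le> z \<longleftrightarrow> T = TU))"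
    "\<And>T x. (T,x) \<in> {(x1,p1),(z1,q1)} \<Longrightarrow> T \<noteq> TE \<Longrightarrow> VE x (if T = TU then a else a - 1) \<in> pedges w1"
    by blast+
  from G2 have A2: "p2 < q2" "\<And>x. HE x a \<in> pedges w2 \<longleftrightarrow> p2 \<le> x \<and> x < q2"
    "\<And>x z. VE x z \<in> pedges w2 \<Longrightarrow> (\<exists>T. (T,x) \<in> {(x2,p2),(z2,q2)} \<and> T \<noteq> TE \<and> (a \<le> z \<longleftrightarrow> T = TU))"
    "\<And>T x. (T,x) \<in> {(x2,p2),(z2,q2)} \<Longrightarrow> T \<noteq> TE \<Longrightarrow> VE x (if T = TU then a else a - 1) \<in> pedges w2"
    by blast+
  have ic: "tintersects (tproj_path w1 a) (tproj_path w2 a) \<longleftrightarrow>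
    (max p1 p2 + 1 \<le> min q1 q2 \<or> (x1 \<noteq> TE \<and> ((x1,p1) = (x2,p2) \<or> (x1,p1) = (z2,q2))) \<or>
     (z1 \<noteq> TE \<and> ((z1,q1) = (x2,p2) \<or> (z1,q1) = (z2,q2))))"
    unfolding t1 t2 by (rule inter_char[OF A1(1) A2(1)])
  show ?thesis
  proof
    assume "pedges w1 \<inter> pedges w2 \<noteq> {}"
    then obtain e where e: "e \<in> pedges w1" "e \<in> pedges w2" by blast
    show "tintersects (tproj_path w1 a) (tproj_path w2 a)"
    proof (cases e)
      case (HE x z)
      with e rows have "z = a" by blast
      with e HE A1(2) A2(2) have "p1 \<le> x" "x < q1" "p2 \<le> x" "x < q2" by auto
      then have "max p1 p2 + 1 \<le> min q1 q2" by (simp add: max_def min_def)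
      then show ?thesis using ic by blast
    next
      case (VE x z)
      obtain T1 where T1: "(T1,x) \<in> {(x1,p1),(z1,q1)}" "T1 \<noteq> TE" "a \<le> z \<longleftrightarrow> T1 = TU"
        using A1(3) e VE by blast
      obtain T2 where T2: "(T2,x) \<in> {(x2,p2),(z2,q2)}" "T2 \<noteq> TE" "a \<le> z \<longleftrightarrow> T2 = TU"
        using A2(3) e VE by blast
      have eq: "T1 = T2" using ty_eq T1 T2 by blast
      have c1: "(T1,x) = (x1,p1) \<or> (T1,x) = (z1,q1)" using T1(1) by simp
      have c2: "(T1,x) = (x2,p2) \<or> (T1,x) = (z2,q2)" using T2(1) eq by simp
      from c1 c2 T1(2) have "(x1 \<noteq> TE \<and> ((x1,p1) = (x2,p2) \<or> (x1,p1) = (z2,q2))) \<or>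
     (z1 \<noteq> TE \<and> ((z1,q1) = (x2,p2) \<or> (z1,q1) = (z2,q2)))" by (elim disjE) simp_all
      then show ?thesis using ic by blast
    qed
  next
    assume "tintersects (tproj_path w1 a) (tproj_path w2 a)"
    then consider "max p1 p2 + 1 \<le> min q1 q2"
      | T x where "(T,x) \<in> {(x1,p1),(z1,q1)}" "(T,x) \<in> {(x2,p2),(z2,q2)}" "T \<noteq> TE"
      using ic by blast
    then show "pedges w1 \<inter> pedges w2 \<noteq> {}"
    proof cases
      case 1
      then have "HE (max p1 p2) a \<in> pedges w1" "HE (max p1 p2) a \<in> pedges w2"
        using A1(2) A2(2) by auto
      then show ?thesis by blast
    next
      case (2 T x)
      then have "VE x (if T = TU then a else a - 1) \<in> pedges w1"
        "VE x (if T = TU then a else a - 1) \<in> pedges w2"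
        using A1(4) A2(4) by auto
      then show ?thesis by blast
    qed
  qed
qed



lemma oneD:
  fixes S :: "tint set" and D :: ty
  assumes fin: "finite S" and D: "D \<noteq> TE"
    and shp: "\<forall>s\<in>S. \<exists>c1 \<alpha> c2 \<beta>. s = ((c1,\<alpha>),(c2,\<beta>)) \<and> \<alpha> < \<beta> \<and> ((c1 = TE \<and> c2 = D) \<or> (c1 = D \<and> c2 = TE))"
    and s12: "s1 \<in> S" "s2 \<in> S" "\<not> tintersects s1 s2"
  shows "\<exists>t. proper t \<and> (\<forall>s\<in>S. tintersects s t) \<and>
     (\<forall>xu p zu q. p < q \<longrightarrow> ((\<forall>s\<in>S. tintersects ((xu,p),(zu,q)) s) \<longleftrightarrow> tcontains ((xu,p),(zu,q)) t))"
proof -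
  have ne: "S \<noteq> {}" using s12 by blast
  define r where "r = Min ((\<lambda>s. snd (snd s)) ` S)"
  define l where "l = Max ((\<lambda>s. snd (fst s)) ` S)"
  have rle: "\<And>s. s \<in> S \<Longrightarrow> r \<le> snd (snd s)" unfolding r_def using fin by simp
  have lge: "\<And>s. s \<in> S \<Longrightarrow> snd (fst s) \<le> l" unfolding l_def using fin by simp
  have "r \<in> (\<lambda>s. snd (snd s)) ` S" unfolding r_def using fin ne by (intro Min_in) auto
  then obtain sr0 where sr0: "sr0 \<in> S" "snd (snd sr0) = r" by auto
  have "l \<in> (\<lambda>s. snd (fst s)) ` S" unfolding l_def using fin ne by (intro Max_in) auto
  then obtain sl0 where sl0: "sl0 \<in> S" "snd (fst sl0) = l" by auto
  define RTE where "RTE = (\<exists>s\<in>S. snd s = (TE, r))"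
  define LTE where "LTE = (\<exists>s\<in>S. fst s = (TE, l))"
  obtain sr where sr: "sr \<in> S" "snd (snd sr) = r" "RTE \<Longrightarrow> fst (snd sr) = TE"
  proof (cases RTE)
    case True
    then obtain s where "s \<in> S" "snd s = (TE, r)" unfolding RTE_def by blast
    then show thesis using that[of s] by auto
  next
    case False
    then show thesis using that[of sr0] sr0 by auto
  qed
  obtain sl where sl: "sl \<in> S" "snd (fst sl) = l" "LTE \<Longrightarrow> fst (fst sl) = TE"
  proof (cases LTE)
    case True
    then obtain s where "s \<in> S" "fst s = (TE, l)" unfolding LTE_def by blast
    then show thesis using that[of s] by auto
  next
    case False
    then show thesis using that[of sl0] sl0 by auto
  qed
  obtain a1 \<alpha>1 b1 where srf: "sr = ((a1,\<alpha>1),(b1,r))" "\<alpha>1 < r" "(a1 = TE \<and> b1 = D) \<or> (a1 = D \<and> b1 = TE)"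
    using shp sr by fastforce
  obtain a2 b2 \<beta>2 where slf: "sl = ((a2,l),(b2,\<beta>2))" "l < \<beta>2" "(a2 = TE \<and> b2 = D) \<or> (a2 = D \<and> b2 = TE)"
    using shp sl by fastforce
  have b1i: "b1 = TE \<longleftrightarrow> RTE"
  proof
    assume "b1 = TE"
    then have "snd sr = (TE, r)" using srf(1) by simp
    then show RTE unfolding RTE_def using sr(1) by blast
  next
    assume RTE then show "b1 = TE" using sr(3) srf(1) by simp
  qed
  have a2i: "a2 = TE \<longleftrightarrow> LTE"
  proof
    assume "a2 = TE"
    then have "fst sl = (TE, l)" using slf(1) by simp
    then show LTE unfolding LTE_def using sl(1) by blast
  next
    assume LTE then show "a2 = TE" using sl(3) slf(1) by simp
  qed
  have rl: "r \<le> l"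
  proof -
    obtain c1 \<alpha> c2 \<beta> where e1: "s1 = ((c1,\<alpha>),(c2,\<beta>))" "\<alpha> < \<beta>" using shp s12 by blast
    obtain d1 \<gamma> d2 \<delta> where e2: "s2 = ((d1,\<gamma>),(d2,\<delta>))" "\<gamma> < \<delta>" using shp s12 by blast
    have "\<not> (max \<alpha> \<gamma> + 1 \<le> min \<beta> \<delta>)" using s12(3) unfolding e1 e2 by simp
    then have "\<beta> \<le> \<gamma> \<or> \<delta> \<le> \<alpha>" using e1 e2 by (auto simp: max_def min_def split: if_splits)
    moreover have "r \<le> \<beta>" "\<gamma> \<le> l" "r \<le> \<delta>" "\<alpha> \<le> l"
      using rle[OF s12(1)] rle[OF s12(2)] lge[OF s12(1)] lge[OF s12(2)] e1 e2 by auto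
    ultimately show ?thesis by linarith
  qed
  define t where "t = (tl1 D b1 r, tr1 D a2 l)"
  have sfacts: "\<And>s. s \<in> S \<Longrightarrow> \<exists>c1 \<alpha> c2 \<beta>. s = ((c1,\<alpha>),(c2,\<beta>)) \<and> \<alpha> < \<beta> \<and> ((c1 = TE \<and> c2 = D) \<or> (c1 = D \<and> c2 = TE))
     \<and> r \<le> \<beta> \<and> \<alpha> \<le> l \<and> (\<beta> = r \<longrightarrow> c2 = TE \<longrightarrow> b1 = TE) \<and> (\<alpha> = l \<longrightarrow> c1 = TE \<longrightarrow> a2 = TE)"
  proof -
    fix s assume s: "s \<in> S"
    then obtain c1 \<alpha> c2 \<beta> where e: "s = ((c1,\<alpha>),(c2,\<beta>))" "\<alpha> < \<beta>" "((c1 = TE \<and> c2 = D) \<or> (c1 = D \<and> c2 = TE))"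
      using shp by blast
    have "r \<le> \<beta>" "\<alpha> \<le> l" using rle[OF s] lge[OF s] e by auto
    moreover have "\<beta> = r \<longrightarrow> c2 = TE \<longrightarrow> b1 = TE"
    proof (intro impI)
      assume "\<beta> = r" "c2 = TE"
      then have "snd s = (TE, r)" using e(1) by simp
      then have RTE unfolding RTE_def using s by blast
      then show "b1 = TE" using b1i by blast
    qed
    moreover have "\<alpha> = l \<longrightarrow> c1 = TE \<longrightarrow> a2 = TE"
    proof (intro impI)
      assume "\<alpha> = l" "c1 = TE"
      then have "fst s = (TE, l)" using e(1) by simp
      then have LTE unfolding LTE_def using s by blast
      then show "a2 = TE" using a2i by blast
    qed
    ultimately show "?thesis s" using e by blast
  qed
  have P1: "proper t" unfolding t_def using dir4[OF D rl] .
  have P2: "\<forall>s\<in>S. tintersects s t"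
  proof
    fix s assume "s \<in> S"
    then obtain c1 \<alpha> c2 \<beta> where e: "s = ((c1,\<alpha>),(c2,\<beta>))" "\<alpha> < \<beta>" "((c1 = TE \<and> c2 = D) \<or> (c1 = D \<and> c2 = TE))"
      "r \<le> \<beta>" "\<alpha> \<le> l" "\<beta> = r \<longrightarrow> c2 = TE \<longrightarrow> b1 = TE" "\<alpha> = l \<longrightarrow> c1 = TE \<longrightarrow> a2 = TE"
      using sfacts by blast
    show "tintersects s t" unfolding e(1) t_def
      by (rule dir3[OF D e(3) e(2) e(4) e(5) rl]) (use e in auto)
  qed
  have P3: "\<forall>xu p zu q. p < q \<longrightarrow> ((\<forall>s\<in>S. tintersects ((xu,p),(zu,q)) s) \<longleftrightarrow> tcontains ((xu,p),(zu,q)) t)"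
  proof (intro allI impI iffI)
    fix xu p zu q assume pq: "(p::int) < q" and all: "\<forall>s\<in>S. tintersects ((xu,p),(zu,q)) s"
    have "tintersects ((xu,p),(zu,q)) sr" using all sr(1) by blast
    then have ir: "tintersects ((xu,p),(zu,q)) ((a1,\<alpha>1),(b1,r))" by (simp only: srf(1))
    have "tintersects ((xu,p),(zu,q)) sl" using all sl(1) by blast
    then have il: "tintersects ((xu,p),(zu,q)) ((a2,l),(b2,\<beta>2))" by (simp only: slf(1))
    have pr: "p \<le> r" by (rule le_r[OF pq srf(2) ir])
    have lq: "l \<le> q" by (rule ge_l[OF pq slf(2) il])
    have cl: "if b1 = TE then p < r else (p < r \<or> (p = r \<and> xu = D))"
      by (rule Cl[OF D srf(3) srf(2) pq pr _ ir]) (use rl lq in linarith)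
    have cr: "if a2 = TE then l < q else (l < q \<or> (q = l \<and> zu = D))"
      by (rule Cr[OF D slf(3) slf(2) pq _ lq il]) (use rl pr in linarith)
    show "tcontains ((xu,p),(zu,q)) t" unfolding t_def using contains_iff[OF D rl pq] cl cr by blast
  next
    fix xu p zu q assume pq: "(p::int) < q" and c: "tcontains ((xu,p),(zu,q)) t"
    have cc: "(if b1 = TE then p < r else (p < r \<or> (p = r \<and> xu = D)))"
      "(if a2 = TE then l < q else (l < q \<or> (q = l \<and> zu = D)))"
      using contains_iff[OF D rl pq] c unfolding t_def by blast+
    show "\<forall>s\<in>S. tintersects ((xu,p),(zu,q)) s"
    proof
      fix s assume "s \<in> S"
      then obtain c1 \<alpha> c2 \<beta> where e: "s = ((c1,\<alpha>),(c2,\<beta>))" "\<alpha> < \<beta>" "((c1 = TE \<and> c2 = D) \<or> (c1 = D \<and> c2 = TE))"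
        "r \<le> \<beta>" "\<alpha> \<le> l" "\<beta> = r \<longrightarrow> c2 = TE \<longrightarrow> b1 = TE" "\<alpha> = l \<longrightarrow> c1 = TE \<longrightarrow> a2 = TE"
        using sfacts by blast
      show "tintersects ((xu,p),(zu,q)) s" unfolding e(1)
        by (rule dir2[OF D e(3) e(2) e(4) e(5) rl _ _ pq cc]) (use e in auto)
    qed
  qed
  show ?thesis using P1 P2 P3 by blast
qed



theorem lemma5:
  fixes V :: "'v set" and adj :: "'v \<Rightarrow> 'v \<Rightarrow> bool" and P :: "'v \<Rightarrow> path2"
    and a b :: int and Y :: "'v set"
  assumes "finite V"
    and "B2_rep V adj P"
    and "a \<noteq> b"
    and "Y \<subseteq> V"
    and "\<forall>y\<in>Y. index P y = {a, b}"
    and "\<not> proj_clique P Y a"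
  shows "\<exists>t. proper t \<and>
           (\<forall>y\<in>Y. tintersects (tproj P y a) t) \<and>
           (\<forall>u\<in>V. (index P u = {a} \<or> (\<exists>c. c \<noteq> a \<and> c \<noteq> b \<and> index P u = {a, c})) \<longrightarrow>
                   ((\<forall>y\<in>Y. adj u y) \<longleftrightarrow> tcontains (tproj P u a) t))"
proof -
  note rep = assms(2)[unfolded B2_rep_def]
  have valid: "\<And>v. v \<in> V \<Longrightarrow> valid_path (P v)" using rep by blast
  have idx: "\<And>v. index P v = {z. \<exists>x. HE x z \<in> pedges (P v)}" by (simp add: index_def)
  define D where "D = (if a < b then TU else TD)"
  have D: "D \<noteq> TE" unfolding D_def by simp
  define S where "S = (\<lambda>y. tproj P y a) ` Y"
  have finS: "finite S" unfolding S_def using assms(1,4) finite_subset by blast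
  have shp: "\<forall>s\<in>S. \<exists>c1 \<alpha> c2 \<beta>. s = ((c1,\<alpha>),(c2,\<beta>)) \<and> \<alpha> < \<beta> \<and> ((c1 = TE \<and> c2 = D) \<or> (c1 = D \<and> c2 = TE))"
  proof
    fix s assume "s \<in> S"
    then obtain y where y: "y \<in> Y" "s = tproj P y a" unfolding S_def by blast
    have "valid_path (P y)" using valid y assms(4) by blast
    moreover have "{z. \<exists>x. HE x z \<in> pedges (P y)} = {a,b}" using assms(5) y idx by simp
    ultimately show "\<exists>c1 \<alpha> c2 \<beta>. s = ((c1,\<alpha>),(c2,\<beta>)) \<and> \<alpha> < \<beta> \<and> ((c1 = TE \<and> c2 = D) \<or> (c1 = D \<and> c2 = TE))"
      using yshape[OF _ _ assms(3)] y unfolding D_def tproj_def by blast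
  qed
  obtain y1 y2 where y12: "y1 \<in> Y" "y2 \<in> Y" "\<not> tintersects (tproj P y1 a) (tproj P y2 a)"
    using assms(6) unfolding proj_clique_def by blast
  obtain t where t: "proper t" "\<forall>s\<in>S. tintersects s t"
     "\<forall>xu p zu q. p < q \<longrightarrow> ((\<forall>s\<in>S. tintersects ((xu,p),(zu,q)) s) \<longleftrightarrow> tcontains ((xu,p),(zu,q)) t)"
    using oneD[OF finS D shp, of "tproj P y1 a" "tproj P y2 a"] y12 unfolding S_def by blast
  have goodY: "\<And>y. y \<in> Y \<Longrightarrow> good (P y) a"
  proof -
    fix y assume y: "y \<in> Y"
    show "good (P y) a" using good_path[of "P y" a] valid y assms(4,5) idx by blast
  qed
  show ?thesis
  proof (intro exI conjI ballI impI)
    show "proper t" by (rule t(1))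
  next
    fix y assume "y \<in> Y" then show "tintersects (tproj P y a) t" using t(2) unfolding S_def by blast
  next
    fix u assume u: "u \<in> V" and ui: "index P u = {a} \<or> (\<exists>c. c \<noteq> a \<and> c \<noteq> b \<and> index P u = {a, c})"
    have aiu: "a \<in> index P u" using ui by blast
    have gu: "good (P u) a" using good_path[of "P u" a] valid[OF u] aiu idx by blast
    obtain xu p zu q where tu: "tproj P u a = ((xu,p),(zu,q))" by (metis prod.collapse)
    have pq: "p < q" using gu tu unfolding good_def Let_def tproj_def by simp
    have eq: "adj u y \<longleftrightarrow> tintersects (tproj P u a) (tproj P y a)" if y: "y \<in> Y" for y
    proof -
      have yV: "y \<in> V" using y assms(4) by blast
      have iy: "index P y = {a,b}" using assms(5) y by blast
      have "u \<noteq> y" using ui iy assms(3) by auto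
      have rows: "\<forall>z. (\<exists>x. HE x z \<in> pedges (P u)) \<and> (\<exists>x. HE x z \<in> pedges (P y)) \<longrightarrow> z = a"
      proof (intro allI impI)
        fix z assume "(\<exists>x. HE x z \<in> pedges (P u)) \<and> (\<exists>x. HE x z \<in> pedges (P y))"
        then have "z \<in> index P u" "z \<in> index P y" using idx by auto
        then show "z = a" using ui iy by auto
      qed
      have "adj u y \<longleftrightarrow> pedges (P u) \<inter> pedges (P y) \<noteq> {}" using rep u yV \<open>u \<noteq> y\<close> by blast
      also have "\<dots> \<longleftrightarrow> tintersects (tproj P u a) (tproj P y a)"
        unfolding tproj_def by (rule adj_char[OF gu goodY[OF y] rows])
      finally show ?thesis .
    qed
    have "(\<forall>y\<in>Y. adj u y) \<longleftrightarrow> (\<forall>s\<in>S. tintersects (tproj P u a) s)"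
      unfolding S_def using eq by auto
    also have "\<dots> \<longleftrightarrow> tcontains (tproj P u a) t" unfolding tu using t(3) pq by blast
    finally show "(\<forall>y\<in>Y. adj u y) \<longleftrightarrow> tcontains (tproj P u a) t" .
  qed
qed

end
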